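(* Let $n\ge 2$, let $\mathcal I$ be the set of transpositions in the symmetric group $S_n$, and let $H$ be an abelian group. Then $S_n=\langle\mathcal I\rangle$ and for every $\tau_1,\tau_2\in\mathcal I$ there exists $t\in S_n$ with $t^2=\tau_1\tau_2$. Consequently $S_1(S_n,H)=S_{1,2}(S_n,H)\cong \mathrm{Hom}(S_n,H)$. Moreover, every $f\in S_1(S_n,H)$ is determined by a choice of $u\in H[2]$ and satisfies $f(\sigma)=0$ if $\sigma$ is even and $f(\sigma)=u$ if $\sigma$ is odd.
   Context: $H$ is written additively; $H[2]=\{h\in H:2h=0\}$. For a group $G$ with identity $e$, $S_1(G,H)$ is the set of $f:G\to H$ with $f(e)=0$ and $f(xy)+f(xy^{-1})=2f(x)$ for all $x,y\in G$; $S_{1,2}(G,H)$ is the subset of those also satisfying $f(xy)+f(x^{-1}y)=2f(y)$ for all $x,y\in G$. *)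

theory Defs
  imports "HOL-Algebra.Sym_Groups"
begin

text \<open>S_1(G,H): maps f : G -> H with f(e)=0 and f(xy)+f(xy^{-1}) = 2 f(x).
  Only the values on the carrier of G are constrained.\<close>
definition S1 :: "('g, 'm) monoid_scheme \<Rightarrow> ('g \<Rightarrow> 'h::ab_group_add) set" where
  "S1 G = {f. f \<one>\<^bsub>G\<^esub> = 0 \<and>
     (\<forall>x\<in>carrier G. \<forall>y\<in>carrier G.
        f (x \<otimes>\<^bsub>G\<^esub> y) + f (x \<otimes>\<^bsub>G\<^esub> inv\<^bsub>G\<^esub> y) = f x + f x)}"

definition S12 :: "('g, 'm) monoid_scheme \<Rightarrow> ('g \<Rightarrow> 'h::ab_group_add) set" where
  "S12 G = {f. f \<in> S1 G \<and>
     (\<forall>x\<in>carrier G. \<forall>y\<in>carrier G.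
        f (x \<otimes>\<^bsub>G\<^esub> y) + f (inv\<^bsub>G\<^esub> x \<otimes>\<^bsub>G\<^esub> y) = f y + f y)}"

definition Hom_to :: "('g, 'm) monoid_scheme \<Rightarrow> ('g \<Rightarrow> 'h::ab_group_add) set" where
  "Hom_to G = {f. \<forall>x\<in>carrier G. \<forall>y\<in>carrier G. f (x \<otimes>\<^bsub>G\<^esub> y) = f x + f y}"

definition transpositions :: "nat \<Rightarrow> (nat \<Rightarrow> nat) set" where
  "transpositions n = {transpose a b | a b. a \<in> {1..n} \<and> b \<in> {1..n} \<and> a \<noteq> b}"

end

theory Submission
  imports Defs
begin


context group begin

lemma S1_props:
  fixes f :: "'a \<Rightarrow> 'h::ab_group_add"
  assumes "f \<in> S1 G"
  shows S1_one: "f \<one> = 0"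
    and S1_J: "\<And>x y. x \<in> carrier G \<Longrightarrow> y \<in> carrier G \<Longrightarrow> f (x \<otimes> y) + f (x \<otimes> inv y) = f x + f x"
  using assms unfolding S1_def by auto

lemma S1_inv:
  fixes f :: "'a \<Rightarrow> 'h::ab_group_add"
  assumes "f \<in> S1 G" "y \<in> carrier G"
  shows "f (inv y) = - f y"
  using S1_J[OF assms(1) one_closed assms(2)] S1_one[OF assms(1)] assms(2)
  by (simp add: add_eq_0_iff)

lemma S1_left:
  fixes f :: "'a \<Rightarrow> 'h::ab_group_add"
  assumes "f \<in> S1 G" "x \<in> carrier G" "y \<in> carrier G"
  shows "f (y \<otimes> x) + f (inv y \<otimes> x) = f x + f x"
proof -
  have "f (inv x \<otimes> inv y) + f (inv x \<otimes> inv (inv y)) = f (inv x) + f (inv x)"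
    using S1_J[OF assms(1), of "inv x" "inv y"] assms by simp
  moreover have "inv x \<otimes> inv y = inv (y \<otimes> x)" using assms by (simp add: inv_mult_group)
  moreover have "inv x \<otimes> inv (inv y) = inv (inv y \<otimes> x)" using assms by (simp add: inv_mult_group)
  ultimately have "- (f (y \<otimes> x) + f (inv y \<otimes> x)) = - (f x + f x)"
    using S1_inv[OF assms(1)] assms by (simp add: algebra_simps)
  then show ?thesis by (simp only: neg_equal_iff_equal)
qed

lemma S1_eq_S12: "(S1 G :: ('a \<Rightarrow> 'h::ab_group_add) set) = S12 G"
  unfolding S12_def using S1_left by auto

lemma S1_sym:
  fixes f :: "'a \<Rightarrow> 'h::ab_group_add"
  assumes "f \<in> S1 G" "x \<in> carrier G" "y \<in> carrier G"
  shows "f (x \<otimes> y) + f (y \<otimes> x) = f x + f x + f y + f y"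
proof -
  have 1: "f (x \<otimes> y) + f (x \<otimes> inv y) = f x + f x" using S1_J[OF assms(1)] assms by simp
  have 2: "f (y \<otimes> x) + f (y \<otimes> inv x) = f y + f y" using S1_J[OF assms(1)] assms by simp
  have "y \<otimes> inv x = inv (x \<otimes> inv y)" using assms by (simp add: inv_mult_group)
  then have 3: "f (y \<otimes> inv x) = - f (x \<otimes> inv y)" using S1_inv[OF assms(1)] assms by simp
  show ?thesis using 1 2 3 by (simp add: algebra_simps)
qed

lemma Hom_S12: "(Hom_to G :: ('a \<Rightarrow> 'h::ab_group_add) set) \<subseteq> S12 G"
proof
  fix f :: "'a \<Rightarrow> 'h" assume f: "f \<in> Hom_to G"
  have h: "\<And>x y. x \<in> carrier G \<Longrightarrow> y \<in> carrier G \<Longrightarrow> f (x \<otimes> y) = f x + f y"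
    using f unfolding Hom_to_def by auto
  have o: "f \<one> = 0" using h[of \<one> \<one>] by simp
  have i: "\<And>y. y \<in> carrier G \<Longrightarrow> f (inv y) = - f y"
    using h o by (metis add_eq_0_iff inv_closed r_inv)
  show "f \<in> S12 G" unfolding S12_def S1_def using h o i by auto
qed

lemma S1_D:
  fixes f :: "'a \<Rightarrow> 'h::ab_group_add"
  assumes "f \<in> S1 G" "t \<in> carrier G" "t \<otimes> t = \<one>" "s \<in> carrier G" "w \<in> carrier G"
  shows "f (s \<otimes> s \<otimes> w \<otimes> t) - f (s \<otimes> s \<otimes> w) = f (w \<otimes> t) - f w"
proof -
  have it: "inv t = t" using assms by (simp add: inv_equality)
  have D2: "\<And>z. z \<in> carrier G \<Longrightarrow> f (z \<otimes> t) + f (z \<otimes> t) = f z + f z"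
    using S1_J[OF assms(1) _ assms(2)] it by simp
  have Dl: "\<And>y x. x \<in> carrier G \<Longrightarrow> y \<in> carrier G \<Longrightarrow>
     f (y \<otimes> x \<otimes> t) - f (y \<otimes> x) = f (inv y \<otimes> x \<otimes> t) - f (inv y \<otimes> x)"
  proof -
    fix x y assume xy: "x \<in> carrier G" "y \<in> carrier G"
    have a: "f (y \<otimes> (x \<otimes> t)) + f (inv y \<otimes> (x \<otimes> t)) = f (x \<otimes> t) + f (x \<otimes> t)"
      using S1_left[OF assms(1)] xy assms by simp
    have b: "f (y \<otimes> x) + f (inv y \<otimes> x) = f x + f x"
      using S1_left[OF assms(1)] xy assms by simp
    have c: "f (x \<otimes> t) + f (x \<otimes> t) = f x + f x" using D2 xy by simp
    define d where "d = f (inv y \<otimes> x \<otimes> t) - f (inv y \<otimes> x)"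
    have dd: "d + d = 0" using D2[of "inv y \<otimes> x"] xy unfolding d_def by (simp add: algebra_simps)
    have a': "f (y \<otimes> x \<otimes> t) + f (inv y \<otimes> x \<otimes> t) = f (x \<otimes> t) + f (x \<otimes> t)"
      using a xy assms by (simp add: m_assoc)
    have e: "(f (y \<otimes> x \<otimes> t) - f (y \<otimes> x)) + d = 
       (f (y \<otimes> x \<otimes> t) + f (inv y \<otimes> x \<otimes> t)) - (f (y \<otimes> x) + f (inv y \<otimes> x))"
      unfolding d_def by (simp add: algebra_simps)
    have "(f (y \<otimes> x \<otimes> t) - f (y \<otimes> x)) + d = 0"
      unfolding e a' b c by simp
    then have "f (y \<otimes> x \<otimes> t) - f (y \<otimes> x) = - d"
      by (simp add: eq_neg_iff_add_eq_0)
    also have "\<dots> = d" using dd by (simp add: add_eq_0_iff)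
    finally show "f (y \<otimes> x \<otimes> t) - f (y \<otimes> x) = f (inv y \<otimes> x \<otimes> t) - f (inv y \<otimes> x)"
      unfolding d_def .
  qed
  have "f (s \<otimes> (s \<otimes> w) \<otimes> t) - f (s \<otimes> (s \<otimes> w)) = f (inv s \<otimes> (s \<otimes> w) \<otimes> t) - f (inv s \<otimes> (s \<otimes> w))"
    using Dl[of "s \<otimes> w" s] assms by simp
  moreover have "inv s \<otimes> (s \<otimes> w) = w" using assms by (simp add: m_assoc[symmetric])
  moreover have "s \<otimes> (s \<otimes> w) = s \<otimes> s \<otimes> w" using assms by (simp add: m_assoc)
  ultimately show ?thesis by simp
qed

end



lemma trans_mem:
  assumes "\<tau> \<in> transpositions n"
  shows "\<tau> \<in> carrier (sym_group n)" "\<tau> \<circ> \<tau> = id"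
  using assms unfolding transpositions_def sym_group_carrier
  by (auto intro: permutes_swap_id)

lemma square_ex:
  assumes "\<tau>1 \<in> transpositions n" "\<tau>2 \<in> transpositions n"
  shows "\<exists>t\<in>carrier (sym_group n). t \<circ> t = \<tau>1 \<circ> \<tau>2"
proof -
  obtain a b where ab: "\<tau>1 = transpose a b" "a \<in> {1..n}" "b \<in> {1..n}" "a \<noteq> b"
    using assms(1) unfolding transpositions_def by auto
  obtain c d where cd: "\<tau>2 = transpose c d" "c \<in> {1..n}" "d \<in> {1..n}" "c \<noteq> d"
    using assms(2) unfolding transpositions_def by auto
  show ?thesis
  proof (cases "a \<noteq> c \<and> a \<noteq> d \<and> b \<noteq> c \<and> b \<noteq> d")
    case True
    let ?t = "transpose a c \<circ> transpose c b \<circ> transpose b d"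
    have "?t \<in> carrier (sym_group n)" unfolding sym_group_carrier
      using ab cd by (intro permutes_compose permutes_swap_id) auto
    moreover have "?t \<circ> ?t = \<tau>1 \<circ> \<tau>2"
      using True ab cd by (auto simp: fun_eq_iff transpose_def)
    ultimately show ?thesis by blast
  next
    case False
    let ?t = "\<tau>1 \<circ> \<tau>2 \<circ> \<tau>1 \<circ> \<tau>2"
    have "?t \<in> carrier (sym_group n)" unfolding sym_group_carrier
      using ab cd by (auto intro!: permutes_compose permutes_swap_id)
    moreover have "?t \<circ> ?t = \<tau>1 \<circ> \<tau>2"
      using False ab cd by (auto simp: fun_eq_iff transpose_def)
    ultimately show ?thesis by blast
  qed
qed

lemma gen_all:
  "generate (sym_group n) (transpositions n) = carrier (sym_group n)"
proof
  interpret group "sym_group n" by (rule sym_group_is_group)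
  show "generate (sym_group n) (transpositions n) \<subseteq> carrier (sym_group n)"
    by (rule generate_incl) (auto dest: trans_mem)
  show "carrier (sym_group n) \<subseteq> generate (sym_group n) (transpositions n)"
  proof
    fix p assume "p \<in> carrier (sym_group n)"
    then have "p permutes {1..n}" by (simp add: sym_group_carrier)
    then show "p \<in> generate (sym_group n) (transpositions n)"
      using finite_atLeastAtMost[of 1 n]
    proof (induction rule: permutes_induct)
      case id
      then show ?case using generate.one[of "sym_group n" "transpositions n"] by (simp add: sym_group_one id_def)
    next
      case (swap a b p)
      have "transpose a b \<in> transpositions n" using swap unfolding transpositions_def by auto
      then have "transpose a b \<in> generate (sym_group n) (transpositions n)" by (rule generate.incl)
      from generate.eng[OF this swap.IH] show ?case by (simp only: sym_group_mult)
    qed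
  qed
qed

lemma parity_hom:
  "((\<lambda>\<sigma>. if evenperm \<sigma> then 0 else u) :: (nat \<Rightarrow> nat) \<Rightarrow> 'h::ab_group_add) \<in> Hom_to (sym_group n)"
  if "u + u = 0"
  unfolding Hom_to_def using that
  by (auto simp: sym_group_mult evenperm_comp sym_group_carrier')

lemma S1_char:
  fixes f :: "(nat \<Rightarrow> nat) \<Rightarrow> 'h::ab_group_add"
  assumes f: "f \<in> S1 (sym_group n)" and n: "n \<ge> 2"
  shows "\<exists>u. u + u = 0 \<and> (\<forall>\<sigma>\<in>carrier (sym_group n). f \<sigma> = (if evenperm \<sigma> then 0 else u))"
proof -
  interpret G: group "sym_group n" by (rule sym_group_is_group)
  let ?T = "transpositions n"
  have f0: "f id = 0" using G.S1_one[OF f] by (simp add: sym_group_one)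
  have f2: "f \<tau> + f \<tau> = 0" if "\<tau> \<in> ?T" for \<tau>
  proof -
    have "inv\<^bsub>sym_group n\<^esub> \<tau> = \<tau>" using trans_mem[OF that] G.inv_equality[of \<tau> \<tau>]
      by (simp add: sym_group_mult sym_group_one)
    then show ?thesis using G.S1_J[OF f, of id \<tau>] trans_mem[OF that] f0 permutes_id[of "{1..n}"]
      by (simp add: sym_group_mult sym_group_one sym_group_carrier)
  qed
  define D where "D \<tau> p = f (p \<circ> \<tau>) - f p" for \<tau> p
  have DD: "D \<tau> (\<tau>1 \<circ> \<tau>2 \<circ> w) = D \<tau> w"
    if h: "\<tau> \<in> ?T" "\<tau>1 \<in> ?T" "\<tau>2 \<in> ?T" "w \<in> carrier (sym_group n)" for \<tau> \<tau>1 \<tau>2 w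
  proof -
    obtain t where t: "t \<in> carrier (sym_group n)" "t \<circ> t = \<tau>1 \<circ> \<tau>2"
      using square_ex[OF h(2,3)] by blast
    show ?thesis using G.S1_D[OF f, of \<tau> t w] trans_mem[OF h(1)] t h(4)
      unfolding D_def by (simp add: sym_group_mult sym_group_one o_assoc)
  qed
  have Q: "(\<forall>\<tau>\<in>?T. D \<tau> p = f \<tau>) \<and> (\<forall>\<tau>'\<in>?T. \<forall>\<tau>\<in>?T. D \<tau> (\<tau>' \<circ> p) = f \<tau>)"
    if "p permutes {1..n}" for p
    using that finite_atLeastAtMost[of 1 n]
  proof (induction rule: permutes_induct)
    case id
    have "D \<tau> \<tau>' = f \<tau>" if "\<tau> \<in> ?T" "\<tau>' \<in> ?T" for \<tau> \<tau>'
    proof -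
      have "D \<tau> \<tau>' = D \<tau> (\<tau>' \<circ> \<tau> \<circ> \<tau>)" using trans_mem(2)[OF that(1)] by (simp add: comp_assoc)
      also have "\<dots> = D \<tau> \<tau>" using DD[OF that(1) that(2) that(1)] trans_mem(1)[OF that(1)] by simp
      also have "\<dots> = - f \<tau>" unfolding D_def using trans_mem(2)[OF that(1)] f0 by simp
      also have "\<dots> = f \<tau>" using f2[OF that(1)] by (simp add: add_eq_0_iff)
      finally show ?thesis .
    qed
    then show ?case unfolding D_def using f0 by auto
  next
    case (swap a b p)
    have tab: "transpose a b \<in> ?T" using swap unfolding transpositions_def by auto
    have pc: "p \<in> carrier (sym_group n)" using swap by (simp add: sym_group_carrier)
    show ?case
    proof (intro conjI ballI)
      fix \<tau> assume "\<tau> \<in> ?T"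
      then show "D \<tau> (transpose a b \<circ> p) = f \<tau>" using swap.IH tab by blast
    next
      fix \<tau>' \<tau> assume h: "\<tau>' \<in> ?T" "\<tau> \<in> ?T"
      have "D \<tau> (\<tau>' \<circ> (transpose a b \<circ> p)) = D \<tau> p"
        using DD[OF h(2) h(1) tab pc] by (simp add: o_assoc)
      then show "D \<tau> (\<tau>' \<circ> (transpose a b \<circ> p)) = f \<tau>" using swap.IH h(2) by simp
    qed
  qed
  have R: "f (p \<circ> \<tau>) = f p + f \<tau>" if "p \<in> carrier (sym_group n)" "\<tau> \<in> ?T" for p \<tau>
    using Q[of p] that unfolding D_def sym_group_carrier by (simp add: algebra_simps)
  have L: "f (\<tau> \<circ> p) = f \<tau> + f p" if "p \<in> carrier (sym_group n)" "\<tau> \<in> ?T" for p \<tau>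
  proof -
    have "f (p \<circ> \<tau>) + f (\<tau> \<circ> p) = f p + f p + f \<tau> + f \<tau>"
      using G.S1_sym[OF f that(1) trans_mem(1)[OF that(2)]] by (simp add: sym_group_mult)
    then have "f p + f \<tau> + f (\<tau> \<circ> p) = f p + f p + 0" using R[OF that] f2[OF that(2)]
      by (simp add: algebra_simps)
    then have "f (\<tau> \<circ> p) = f p - f \<tau>" by (simp add: algebra_simps)
    moreover have "- f \<tau> = f \<tau>" using f2[OF that(2)] by (simp add: add_eq_0_iff)
    ultimately show ?thesis by (metis add.commute diff_conv_add_uminus)
  qed
  have E: "f (transpose a b) = f (transpose a c)"
    if "a \<in> {1..n}" "b \<in> {1..n}" "c \<in> {1..n}" "a \<noteq> b" "a \<noteq> c" for a b c
  proof (cases "b = c")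
    case False
    have tbc: "transpose b c \<in> ?T" using that False unfolding transpositions_def by auto
    have tab: "transpose a b \<in> ?T" using that unfolding transpositions_def by auto
    have eq: "transpose a c = transpose b c \<circ> (transpose a b \<circ> transpose b c)"
      using that False by (auto simp: fun_eq_iff transpose_def)
    have "f (transpose a c) = f (transpose b c) + (f (transpose a b) + f (transpose b c))"
      unfolding eq using L R trans_mem(1) tbc tab G.m_closed
      by (metis sym_group_mult)
    then show ?thesis using f2[OF tbc] by (simp add: algebra_simps)
  qed simp
  define u where "u = f (transpose 1 2)"
  have fu: "f \<tau> = u" if h: "\<tau> \<in> ?T" for \<tau>
  proof -
    obtain c d where cd: "\<tau> = transpose c d" "c \<in> {1..n}" "d \<in> {1..n}" "c \<noteq> d"
      using h unfolding transpositions_def by auto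
    have 12: "(1::nat) \<in> {1..n}" "(2::nat) \<in> {1..n}" using n by auto
    show ?thesis
    proof (cases "c = 1")
      case True
      then show ?thesis unfolding u_def cd(1) using E[of 1 2 d] 12 cd by auto
    next
      case False
      have "f (transpose 1 2) = f (transpose 1 c)" using E[of 1 2 c] 12 cd False by auto
      also have "\<dots> = f (transpose c 1)" by (simp add: transpose_commute)
      also have "\<dots> = f (transpose c d)" using E[of c 1 d] 12 cd False by auto
      finally show ?thesis unfolding u_def cd(1) by simp
    qed
  qed
  have uu: "u + u = 0"
  proof -
    have "transpose 1 2 \<in> ?T" using n unfolding transpositions_def by force
    then show ?thesis using f2 unfolding u_def by blast
  qed
  have "f p = (if evenperm p then 0 else u)" if "p permutes {1..n}" for p
    using that finite_atLeastAtMost[of 1 n]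
  proof (induction rule: permutes_induct)
    case id
    then show ?case using f0 by (simp add: id_def)
  next
    case (swap a b p)
    have tab: "transpose a b \<in> ?T" using swap unfolding transpositions_def by auto
    have pc: "p \<in> carrier (sym_group n)" using swap by (simp add: sym_group_carrier)
    have "evenperm (transpose a b \<circ> p) = (evenperm (transpose a b) = evenperm p)"
      by (rule evenperm_comp[OF permutation_swap_id sym_group_carrier'[OF pc]])
    then have e: "evenperm (transpose a b \<circ> p) = (\<not> evenperm p)"
      using swap(3) evenperm_swap[of a b] by simp
    have fe: "f (transpose a b \<circ> p) = u + f p" using L[OF pc tab] fu[OF tab] by simp
    show ?case
    proof (cases "evenperm p")
      case True then show ?thesis unfolding fe e using swap.IH by simp
    next
      case False then show ?thesis unfolding fe e using swap.IH uu by simp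
    qed
  qed
  then show ?thesis using uu by (auto simp: sym_group_carrier)
qed


theorem mainTheorem7:
  fixes n :: nat
  assumes "n \<ge> 2"
  shows "(generate (sym_group n) (transpositions n) = carrier (sym_group n)) \<and>
    (\<forall>\<tau>1\<in>transpositions n. \<forall>\<tau>2\<in>transpositions n.
           \<exists>t\<in>carrier (sym_group n).
             t \<otimes>\<^bsub>sym_group n\<^esub> t = \<tau>1 \<otimes>\<^bsub>sym_group n\<^esub> \<tau>2) \<and>
    ((S1 (sym_group n) :: ((nat \<Rightarrow> nat) \<Rightarrow> 'h::ab_group_add) set) = S12 (sym_group n)) \<and>
    ((S12 (sym_group n) :: ((nat \<Rightarrow> nat) \<Rightarrow> 'h) set) = Hom_to (sym_group n)) \<and>
    (\<forall>f \<in> (S1 (sym_group n) :: ((nat \<Rightarrow> nat) \<Rightarrow> 'h) set).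
           \<exists>u::'h. u + u = 0 \<and>
             (\<forall>\<sigma>\<in>carrier (sym_group n). f \<sigma> = (if evenperm \<sigma> then 0 else u))) \<and>
    (\<forall>u::'h. u + u = 0 \<longrightarrow>
           (\<lambda>\<sigma>. if evenperm \<sigma> then 0 else u) \<in> S1 (sym_group n))"
proof -
  interpret G: group "sym_group n" by (rule sym_group_is_group)
  have S12eq: "(S1 (sym_group n) :: ((nat \<Rightarrow> nat) \<Rightarrow> 'h) set) = S12 (sym_group n)"
    by (rule G.S1_eq_S12)
  have HS: "(Hom_to (sym_group n) :: ((nat \<Rightarrow> nat) \<Rightarrow> 'h) set) \<subseteq> S12 (sym_group n)"
    by (rule G.Hom_S12)
  have SH: "f \<in> Hom_to (sym_group n)" if fS: "(f :: (nat \<Rightarrow> nat) \<Rightarrow> 'h) \<in> S12 (sym_group n)" for f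
  proof -
    have "f \<in> S1 (sym_group n)" using fS S12eq by simp
    then obtain u :: 'h where u: "u + u = 0"
      "\<forall>\<sigma>\<in>carrier (sym_group n). f \<sigma> = (if evenperm \<sigma> then 0 else u)"
      using S1_char[OF _ assms] by blast
    have "(\<lambda>\<sigma>. if evenperm \<sigma> then 0 else u) \<in> Hom_to (sym_group n)"
      by (rule parity_hom[OF u(1)])
    then show ?thesis using u(2) G.m_closed unfolding Hom_to_def by auto
  qed
  show ?thesis
  proof (intro conjI)
    show "generate (sym_group n) (transpositions n) = carrier (sym_group n)" by (rule gen_all)
    show "\<forall>\<tau>1\<in>transpositions n. \<forall>\<tau>2\<in>transpositions n.
           \<exists>t\<in>carrier (sym_group n).
             t \<otimes>\<^bsub>sym_group n\<^esub> t = \<tau>1 \<otimes>\<^bsub>sym_group n\<^esub> \<tau>2"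
      using square_ex by (simp add: sym_group_mult)
    show "(S1 (sym_group n) :: ((nat \<Rightarrow> nat) \<Rightarrow> 'h::ab_group_add) set) = S12 (sym_group n)"
      by (rule S12eq)
    show "(S12 (sym_group n) :: ((nat \<Rightarrow> nat) \<Rightarrow> 'h) set) = Hom_to (sym_group n)"
      using HS SH by blast
    show "\<forall>f \<in> (S1 (sym_group n) :: ((nat \<Rightarrow> nat) \<Rightarrow> 'h) set).
           \<exists>u::'h. u + u = 0 \<and>
             (\<forall>\<sigma>\<in>carrier (sym_group n). f \<sigma> = (if evenperm \<sigma> then 0 else u))"
      using S1_char[OF _ assms] by blast
    show "\<forall>u::'h. u + u = 0 \<longrightarrow>
           (\<lambda>\<sigma>. if evenperm \<sigma> then 0 else u) \<in> S1 (sym_group n)"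
      using parity_hom HS S12eq by blast
  qed
qed

end
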